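(* Let $\mathcal K$ be a topological Kuranishi atlas on $X$. Then the maps $|\mathrm{pr}_{\mathcal K}|:|\mathbf E_{\mathcal K}|\to|\mathcal K|$ and $|0_{\mathcal K}|,|\mathfrak s_{\mathcal K}|:|\mathcal K|\to|\mathbf E_{\mathcal K}|$ (induced by $\mathrm{pr}_I$, $0_I$, $\mathfrak s_I$) are well defined and continuous, and satisfy $|\mathrm{pr}_{\mathcal K}|\circ|\mathfrak s_{\mathcal K}|=|\mathrm{pr}_{\mathcal K}|\circ|0_{\mathcal K}|=\mathrm{id}_{|\mathcal K|}$. The set $Z:=\{p\in|\mathcal K|:|\mathfrak s_{\mathcal K}|(p)=|0_{\mathcal K}|(p)\}$ equals $\pi_{\mathcal K}\big(\bigsqcup_{I\in\mathcal I_{\mathcal K}}\{I\}\times\mathfrak s_I^{-1}(0_I)\big)$, and the quotient topology on $Z$ (obtained from $\bigsqcup_I\{I\}\times\mathfrak s_I^{-1}(0_I)$ with the relative topology, modulo the equivalence relation generated by the relations $(I,x)\sim(J,\phi_{IJ}(x))$ with $x\in U_{IJ}\cap\mathfrak s_I^{-1}(0_I)$) coincides with the subspace topology from $|\mathcal K|$. Moreover the map $\iota_{\mathcal K}:X\to|\mathcal K|$, $p\mapsto\pi_{\mathcal K}(I,\psi_I^{-1}(p))$, is independent of the choice of $I\in\mathcal I_{\mathcal K}$ with $p\in F_I$, and is a homeomorphism from $X$ onto $Z$ (with the subspace topology).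
   Context: Notation: for subsets $V'\subset V$ of a topological space, $V'\sqsubset V$ means the closure of $V'$ in $V$ is compact. $X$ is a compact metrizable space. Charts: a topological Kuranishi chart for $X$ with open footprint $F\subset X$ is a tuple $\mathbf K=(U,\mathbb E,\mathfrak s,\psi)$ where $U$ is a separable, locally compact, metrizable space; $\mathbb E$ is a separable, locally compact, metrizable space with continuous maps $\mathrm{pr}:\mathbb E\to U$ and $0:U\to\mathbb E$ with $\mathrm{pr}\circ0=\mathrm{id}_U$; $\mathfrak s:U\to\mathbb E$ is continuous with $\mathrm{pr}\circ\mathfrak s=\mathrm{id}_U$; and $\psi$ is a homeomorphism from $\mathfrak s^{-1}(0):=\{x\in U:\mathfrak s(x)=0(x)\}$ onto $F$. Coordinate changes: for charts $\mathbf K_I,\mathbf K_J$ (components indexed by $I,J$) with $F_I\cap F_J\neq\emptyset$, a coordinate change $\widehat\Phi_{IJ}:\mathbf K_I\to\mathbf K_J$ consists of an open set $U_{IJ}\subset U_I$ with $U_{IJ}\cap\mathfrak s_I^{-1}(0_I)=\psi_I^{-1}(F_I\cap F_J)$ and a topological embedding $\widehat\Phi_{IJ}:\mathrm{pr}_I^{-1}(U_{IJ})\to\mathbb E_J$ such that there is a topological embedding $\phi_{IJ}:U_{IJ}\to U_J$ with $\mathrm{pr}_J\circ\widehat\Phi_{IJ}=\phi_{IJ}\circ\mathrm{pr}_I$, $0_J\circ\phi_{IJ}=\widehat\Phi_{IJ}\circ0_I$ and $\mathfrak s_J\circ\phi_{IJ}=\widehat\Phi_{IJ}\circ\mathfrak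 s_I$ on $U_{IJ}$, and $\phi_{IJ}=\psi_J^{-1}\circ\psi_I$ on $U_{IJ}\cap\mathfrak s_I^{-1}(0_I)$. Atlases: a covering family of basic charts is a finite family $(\mathbf K_i)_{i=1,\dots,N}$ of charts whose footprints cover $X$; $\mathcal I_{\mathcal K}$ is the set of nonempty $I\subset\{1,\dots,N\}$ with $F_I:=\bigcap_{i\in I}F_i\neq\emptyset$. Transition data consist of a chart $\mathbf K_J$ with footprint $F_J$ for each $J\in\mathcal I_{\mathcal K}$ with $|J|\ge2$ (and $\mathbf K_{\{i\}}:=\mathbf K_i$), and a coordinate change $\widehat\Phi_{IJ}:\mathbf K_I\to\mathbf K_J$ for all $I\subsetneq J$ in $\mathcal I_{\mathcal K}$. We set $U_{II}:=U_I$, $\phi_{II}:=\mathrm{id}_{U_I}$. For $I\subsetneq J\subsetneq K$ let $U_{IJK}:=U_{IJ}\cap\phi_{IJ}^{-1}(U_{JK})$. The triple satisfies the weak cocycle condition if $\widehat\Phi_{JK}\circ\widehat\Phi_{IJ}=\widehat\Phi_{IK}$ on $\mathrm{pr}_I^{-1}(U_{IJK}\cap U_{IK})$; the cocycle condition if in addition $U_{IJK}\subset U_{IK}$; the strong cocycle condition if in addition $U_{IJK}=U_{IK}$. A weak topological Kuranishi atlas $\mathcal K$ is a covering family with transition data satisfying the weak cocycle condition for all such triples; a topological Kuranishi atlas is one satisfying the cocycle condition for all triples. Virtual neighbourhood: for a topological Kuranishi atlas, $|\mathcal K|$ is the quotient of $\bigsqcup_{I\in\mathcal I_{\mathcal K}}U_I=\{(I,x):x\in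 U_I\}$ by the equivalence relation generated by $(I,x)\sim(J,\phi_{IJ}(x))$ for $I\subset J$, $x\in U_{IJ}$, with the quotient topology and projection $\pi_{\mathcal K}$; similarly $|\mathbf E_{\mathcal K}|$ is the quotient of $\bigsqcup_I\mathbb E_I$ by the relation generated by $(I,e)\sim(J,\widehat\Phi_{IJ}(e))$ for $e\in\mathrm{pr}_I^{-1}(U_{IJ})$, with projection $\pi_{\mathbf E_{\mathcal K}}$. *)

theory Defs
  imports "HOL-Analysis.Analysis"
begin

definition qtop :: "'a topology \<Rightarrow> ('a \<Rightarrow> 'b) \<Rightarrow> 'b topology" where
  "qtop X f = topology (\<lambda>V. V \<subseteq> f ` topspace X \<and> openin X {x \<in> topspace X. f x \<in> V})"

lemma istopology_qtop:
  "istopology (\<lambda>V. V \<subseteq> f ` topspace X \<and> openin X {x \<in> topspace X. f x \<in> V})"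
  unfolding istopology_def
proof safe
  fix S T assume "S \<subseteq> f ` topspace X" "openin X {x \<in> topspace X. f x \<in> S}"
    "T \<subseteq> f ` topspace X" "openin X {x \<in> topspace X. f x \<in> T}"
  then show "openin X {x \<in> topspace X. f x \<in> S \<inter> T}"
  proof -
    have "{x \<in> topspace X. f x \<in> S \<inter> T} = {x \<in> topspace X. f x \<in> S} \<inter> {x \<in> topspace X. f x \<in> T}"
      by blast
    then show ?thesis using \<open>openin X {x \<in> topspace X. f x \<in> S}\<close> \<open>openin X {x \<in> topspace X. f x \<in> T}\<close>
      by (simp add: openin_Int)
  qed
next
  fix K assume K: "\<forall>V\<in>K. V \<subseteq> f ` topspace X \<and> openin X {x \<in> topspace X. f x \<in> V}"
  have "{x \<in> topspace X. f x \<in> \<Union>K} = (\<Union>V\<in>K. {x \<in> topspace X. f x \<in> V})" by auto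
  then show "openin X {x \<in> topspace X. f x \<in> \<Union>K}" using K by auto
qed auto

lemma openin_qtop:
  "openin (qtop X f) V \<longleftrightarrow> V \<subseteq> f ` topspace X \<and> openin X {x \<in> topspace X. f x \<in> V}"
  unfolding qtop_def by (simp add: topology_inverse' istopology_qtop)

lemma topspace_qtop: "topspace (qtop X f) = f ` topspace X"
proof -
  have "{x \<in> topspace X. f x \<in> f ` topspace X} = topspace X" by blast
  then have "openin (qtop X f) (f ` topspace X)" by (simp add: openin_qtop)
  then show ?thesis using openin_subset openin_qtop
    by (metis openin_topspace subset_antisym)
qed

definition eqclass :: "('a \<times> 'a) set \<Rightarrow> 'a \<Rightarrow> 'a set" where
  "eqclass B p = (B \<union> converse B)\<^sup>* `` {p}"

text \<open>Chart components are indexed by index sets I (sets of natural numbers); all domains U_I share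
  a carrier type 'u and all bundles E_I a carrier type 'e.\<close>
record ('x, 'u, 'e) katlas =
  kN :: nat
  kF :: "nat set \<Rightarrow> 'x set"
  kU :: "nat set \<Rightarrow> 'u topology"
  kE :: "nat set \<Rightarrow> 'e topology"
  kpr :: "nat set \<Rightarrow> 'e \<Rightarrow> 'u"
  kzero :: "nat set \<Rightarrow> 'u \<Rightarrow> 'e"
  ks :: "nat set \<Rightarrow> 'u \<Rightarrow> 'e"
  kpsi :: "nat set \<Rightarrow> 'u \<Rightarrow> 'x"
  kUU :: "nat set \<Rightarrow> nat set \<Rightarrow> 'u set"
  kPhi :: "nat set \<Rightarrow> nat set \<Rightarrow> 'e \<Rightarrow> 'e"
  kphi :: "nat set \<Rightarrow> nat set \<Rightarrow> 'u \<Rightarrow> 'u"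

definition zset :: "'u topology \<Rightarrow> ('u \<Rightarrow> 'e) \<Rightarrow> ('u \<Rightarrow> 'e) \<Rightarrow> 'u set" where
  "zset U z s = {x \<in> topspace U. s x = z x}"

definition top_kchart ::
  "'x topology \<Rightarrow> 'x set \<Rightarrow> 'u topology \<Rightarrow> 'e topology \<Rightarrow> ('e \<Rightarrow> 'u) \<Rightarrow> ('u \<Rightarrow> 'e)
     \<Rightarrow> ('u \<Rightarrow> 'e) \<Rightarrow> ('u \<Rightarrow> 'x) \<Rightarrow> bool" where
  "top_kchart X F U E pr z s psi \<longleftrightarrow>
     openin X F \<and>
     separable_space U \<and> locally_compact_space U \<and> metrizable_space U \<and>
     separable_space E \<and> locally_compact_space E \<and> metrizable_space E \<and>
     continuous_map E U pr \<and> continuous_map U E z \<and> (\<forall>x\<in>topspace U. pr (z x) = x) \<and>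
     continuous_map U E s \<and> (\<forall>x\<in>topspace U. pr (s x) = x) \<and>
     homeomorphic_map (subtopology U (zset U z s)) (subtopology X F) psi"

definition katlas_chart :: "'x topology \<Rightarrow> ('x, 'u, 'e, 'z) katlas_scheme \<Rightarrow> nat set \<Rightarrow> bool" where
  "katlas_chart X K I = top_kchart X (kF K I) (kU K I) (kE K I) (kpr K I) (kzero K I) (ks K I) (kpsi K I)"

abbreviation kzs :: "('x, 'u, 'e, 'z) katlas_scheme \<Rightarrow> nat set \<Rightarrow> 'u set" where
  "kzs K I \<equiv> zset (kU K I) (kzero K I) (ks K I)"

definition top_coord_change :: "('x, 'u, 'e, 'z) katlas_scheme \<Rightarrow> nat set \<Rightarrow> nat set \<Rightarrow> bool" where
  "top_coord_change K I J \<longleftrightarrow>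
     openin (kU K I) (kUU K I J) \<and>
     kUU K I J \<inter> kzs K I = {x \<in> kzs K I. kpsi K I x \<in> kF K I \<inter> kF K J} \<and>
     embedding_map (subtopology (kE K I) {e \<in> topspace (kE K I). kpr K I e \<in> kUU K I J})
                   (kE K J) (kPhi K I J) \<and>
     embedding_map (subtopology (kU K I) (kUU K I J)) (kU K J) (kphi K I J) \<and>
     (\<forall>e\<in>topspace (kE K I). kpr K I e \<in> kUU K I J \<longrightarrow>
        kpr K J (kPhi K I J e) = kphi K I J (kpr K I e)) \<and>
     (\<forall>x\<in>kUU K I J. kzero K J (kphi K I J x) = kPhi K I J (kzero K I x)) \<and>
     (\<forall>x\<in>kUU K I J. ks K J (kphi K I J x) = kPhi K I J (ks K I x)) \<and>
     (\<forall>x\<in>kUU K I J \<inter> kzs K I. kphi K I J x = inv_into (kzs K J) (kpsi K J) (kpsi K I x))"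

definition kindex :: "('x, 'u, 'e, 'z) katlas_scheme \<Rightarrow> nat set set" where
  "kindex K = {I. I \<noteq> {} \<and> I \<subseteq> {1..kN K} \<and> (\<Inter>i\<in>I. kF K {i}) \<noteq> {}}"

definition kUUU :: "('x, 'u, 'e, 'z) katlas_scheme \<Rightarrow> nat set \<Rightarrow> nat set \<Rightarrow> nat set \<Rightarrow> 'u set" where
  "kUUU K I J L = {x \<in> kUU K I J. kphi K I J x \<in> kUU K J L}"

definition top_kuranishi_atlas :: "'x topology \<Rightarrow> ('x, 'u, 'e, 'z) katlas_scheme \<Rightarrow> bool" where
  "top_kuranishi_atlas X K \<longleftrightarrow>
     \<comment> \<open>covering family of basic charts\<close>
     (\<forall>i\<in>{1..kN K}. katlas_chart X K {i}) \<and>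
     (\<Union>i\<in>{1..kN K}. kF K {i}) = topspace X \<and>
     \<comment> \<open>transition charts, with footprint F_J = intersection of basic footprints\<close>
     (\<forall>J\<in>kindex K. kF K J = (\<Inter>i\<in>J. kF K {i}) \<and> katlas_chart X K J) \<and>
     \<comment> \<open>coordinate changes\<close>
     (\<forall>I\<in>kindex K. \<forall>J\<in>kindex K. I \<subset> J \<longrightarrow> top_coord_change K I J) \<and>
     \<comment> \<open>cocycle condition\<close>
     (\<forall>I\<in>kindex K. \<forall>J\<in>kindex K. \<forall>L\<in>kindex K. I \<subset> J \<and> J \<subset> L \<longrightarrow>
        (\<forall>e\<in>topspace (kE K I). kpr K I e \<in> kUUU K I J L \<inter> kUU K I L \<longrightarrow>
            kPhi K J L (kPhi K I J e) = kPhi K I L e) \<and>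
        kUUU K I J L \<subseteq> kUU K I L)"

definition kdisjU :: "('x, 'u, 'e, 'z) katlas_scheme \<Rightarrow> (nat set \<times> 'u) topology" where
  "kdisjU K = sum_topology (kU K) (kindex K)"

definition kdisjE :: "('x, 'u, 'e, 'z) katlas_scheme \<Rightarrow> (nat set \<times> 'e) topology" where
  "kdisjE K = sum_topology (kE K) (kindex K)"

text \<open>generating relations (I,x) ~ (J, phi_IJ x), I \<subset> J; the case I = J (identity) is
  covered by reflexivity of the generated equivalence relation.\<close>
definition krelU :: "('x, 'u, 'e, 'z) katlas_scheme \<Rightarrow> ((nat set \<times> 'u) \<times> (nat set \<times> 'u)) set" where
  "krelU K = {((I, x), (J, kphi K I J x)) | I J x.
                I \<in> kindex K \<and> J \<in> kindex K \<and> I \<subset> J \<and> x \<in> kUU K I J}"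

definition krelE :: "('x, 'u, 'e, 'z) katlas_scheme \<Rightarrow> ((nat set \<times> 'e) \<times> (nat set \<times> 'e)) set" where
  "krelE K = {((I, e), (J, kPhi K I J e)) | I J e.
                I \<in> kindex K \<and> J \<in> kindex K \<and> I \<subset> J \<and> e \<in> topspace (kE K I) \<and> kpr K I e \<in> kUU K I J}"

definition krelZ :: "('x, 'u, 'e, 'z) katlas_scheme \<Rightarrow> ((nat set \<times> 'u) \<times> (nat set \<times> 'u)) set" where
  "krelZ K = {((I, x), (J, kphi K I J x)) | I J x.
                I \<in> kindex K \<and> J \<in> kindex K \<and> I \<subset> J \<and> x \<in> kUU K I J \<inter> kzs K I}"

definition kpiK :: "('x, 'u, 'e, 'z) katlas_scheme \<Rightarrow> nat set \<times> 'u \<Rightarrow> (nat set \<times> 'u) set" where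
  "kpiK K = eqclass (krelU K)"

definition kpiE :: "('x, 'u, 'e, 'z) katlas_scheme \<Rightarrow> nat set \<times> 'e \<Rightarrow> (nat set \<times> 'e) set" where
  "kpiE K = eqclass (krelE K)"

definition kvirt :: "('x, 'u, 'e, 'z) katlas_scheme \<Rightarrow> (nat set \<times> 'u) set topology" where
  "kvirt K = qtop (kdisjU K) (kpiK K)"

definition kvirtE :: "('x, 'u, 'e, 'z) katlas_scheme \<Rightarrow> (nat set \<times> 'e) set topology" where
  "kvirtE K = qtop (kdisjE K) (kpiE K)"

definition kdisjZ :: "('x, 'u, 'e, 'z) katlas_scheme \<Rightarrow> (nat set \<times> 'u) topology" where
  "kdisjZ K = subtopology (kdisjU K) (SIGMA I:kindex K. kzs K I)"

definition kquotZ :: "('x, 'u, 'e, 'z) katlas_scheme \<Rightarrow> (nat set \<times> 'u) set topology" where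
  "kquotZ K = qtop (kdisjZ K) (eqclass (krelZ K))"

definition kprD :: "('x, 'u, 'e, 'z) katlas_scheme \<Rightarrow> nat set \<times> 'e \<Rightarrow> nat set \<times> 'u" where
  "kprD K = (\<lambda>(I, e). (I, kpr K I e))"

definition kzeroD :: "('x, 'u, 'e, 'z) katlas_scheme \<Rightarrow> nat set \<times> 'u \<Rightarrow> nat set \<times> 'e" where
  "kzeroD K = (\<lambda>(I, x). (I, kzero K I x))"

definition ksD :: "('x, 'u, 'e, 'z) katlas_scheme \<Rightarrow> nat set \<times> 'u \<Rightarrow> nat set \<times> 'e" where
  "ksD K = (\<lambda>(I, x). (I, ks K I x))"

definition kprV :: "('x, 'u, 'e, 'z) katlas_scheme \<Rightarrow> (nat set \<times> 'e) set \<Rightarrow> (nat set \<times> 'u) set" where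
  "kprV K c = kpiK K (kprD K (SOME p. p \<in> c))"

definition kzeroV :: "('x, 'u, 'e, 'z) katlas_scheme \<Rightarrow> (nat set \<times> 'u) set \<Rightarrow> (nat set \<times> 'e) set" where
  "kzeroV K c = kpiE K (kzeroD K (SOME p. p \<in> c))"

definition ksV :: "('x, 'u, 'e, 'z) katlas_scheme \<Rightarrow> (nat set \<times> 'u) set \<Rightarrow> (nat set \<times> 'e) set" where
  "ksV K c = kpiE K (ksD K (SOME p. p \<in> c))"

definition kiotaI :: "('x, 'u, 'e, 'z) katlas_scheme \<Rightarrow> nat set \<Rightarrow> 'x \<Rightarrow> (nat set \<times> 'u) set" where
  "kiotaI K I p = kpiK K (I, inv_into (kzs K I) (kpsi K I) p)"

definition kiota :: "('x, 'u, 'e, 'z) katlas_scheme \<Rightarrow> 'x \<Rightarrow> (nat set \<times> 'u) set" where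
  "kiota K p = kiotaI K (SOME I. I \<in> kindex K \<and> p \<in> kF K I) p"

end

theory Submission
  imports Defs
begin

lemma sym_rt: "(a,b) \<in> (B \<union> B\<inverse>)\<^sup>* \<Longrightarrow> (b,a) \<in> (B \<union> B\<inverse>)\<^sup>*"
proof -
  assume "(a,b) \<in> (B \<union> B\<inverse>)\<^sup>*"
  then have "(b,a) \<in> ((B \<union> B\<inverse>)\<inverse>)\<^sup>*" by (simp add: rtrancl_converseI)
  moreover have "(B \<union> B\<inverse>)\<inverse> = B \<union> B\<inverse>" by auto
  ultimately show ?thesis by simp
qed

lemma rt_map:
  assumes "\<And>a b. (a,b) \<in> B \<Longrightarrow> (f a, f b) \<in> (C \<union> C\<inverse>)\<^sup>*"
  shows "(a,b) \<in> (B \<union> B\<inverse>)\<^sup>* \<Longrightarrow> (f a, f b) \<in> (C \<union> C\<inverse>)\<^sup>*"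
proof (induction rule: rtrancl_induct)
  case base then show ?case by simp
next
  case (step y z)
  from step(2) have "(y,z) \<in> B \<or> (z,y) \<in> B" by auto
  then have "(f y, f z) \<in> (C \<union> C\<inverse>)\<^sup>*"
  proof
    assume "(y,z) \<in> B" then show ?thesis by (rule assms)
  next
    assume "(z,y) \<in> B" then show ?thesis by (rule sym_rt[OF assms])
  qed
  with step(3) show ?case by (rule rtrancl_trans)
qed

lemma rt_inv:
  assumes "\<And>a b. (a,b) \<in> B \<Longrightarrow> f a = f b"
  shows "(a,b) \<in> (B \<union> B\<inverse>)\<^sup>* \<Longrightarrow> f a = f b"
proof (induction rule: rtrancl_induct)
  case base then show ?case by simp
next
  case (step y z)
  then show ?case using assms by auto
qed

lemma eqclass_mem: "b \<in> eqclass B a \<longleftrightarrow> (a,b) \<in> (B \<union> B\<inverse>)\<^sup>*"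
  by (simp add: eqclass_def)

lemma eqclass_self: "a \<in> eqclass B a"
  by (simp add: eqclass_def)

lemma eqclass_eq: "(a,b) \<in> (B \<union> B\<inverse>)\<^sup>* \<Longrightarrow> eqclass B a = eqclass B b"
proof -
  assume ab: "(a,b) \<in> (B \<union> B\<inverse>)\<^sup>*"
  show ?thesis
  proof (intro set_eqI iffI)
    fix y assume "y \<in> eqclass B a"
    then have "(a,y) \<in> (B \<union> B\<inverse>)\<^sup>*" by (simp add: eqclass_mem)
    then have "(b,y) \<in> (B \<union> B\<inverse>)\<^sup>*" by (rule rtrancl_trans[OF sym_rt[OF ab]])
    then show "y \<in> eqclass B b" by (simp add: eqclass_mem)
  next
    fix y assume "y \<in> eqclass B b"
    then have "(b,y) \<in> (B \<union> B\<inverse>)\<^sup>*" by (simp add: eqclass_mem)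
    then have "(a,y) \<in> (B \<union> B\<inverse>)\<^sup>*" by (rule rtrancl_trans[OF ab])
    then show "y \<in> eqclass B a" by (simp add: eqclass_mem)
  qed
qed

lemma eqclass_eq_iff: "eqclass B a = eqclass B b \<longleftrightarrow> (a,b) \<in> (B \<union> B\<inverse>)\<^sup>*"
proof
  assume "eqclass B a = eqclass B b"
  then have "b \<in> eqclass B a" using eqclass_self[of b B] by simp
  then show "(a,b) \<in> (B \<union> B\<inverse>)\<^sup>*" by (simp add: eqclass_mem)
qed (rule eqclass_eq)

lemma cm_top: "continuous_map X Y f \<Longrightarrow> x \<in> topspace X \<Longrightarrow> f x \<in> topspace Y"
  using continuous_map_image_subset_topspace by blast

lemma cm_open: "continuous_map X Y f \<Longrightarrow> openin Y U \<Longrightarrow> openin X {x \<in> topspace X. f x \<in> U}"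
  unfolding continuous_map_def by blast

lemma cm_intro: "(\<And>x. x \<in> topspace X \<Longrightarrow> f x \<in> topspace Y) \<Longrightarrow>
    (\<And>U. openin Y U \<Longrightarrow> openin X {x \<in> topspace X. f x \<in> U}) \<Longrightarrow> continuous_map X Y f"
  unfolding continuous_map_def by blast

lemma qtop_cont: "continuous_map X (qtop X f) f"
proof (rule cm_intro)
  fix x assume "x \<in> topspace X"
  then show "f x \<in> topspace (qtop X f)" unfolding topspace_qtop by (rule imageI)
next
  fix U assume "openin (qtop X f) U"
  then show "openin X {x \<in> topspace X. f x \<in> U}" unfolding openin_qtop by (rule conjunct2)
qed

lemma qtop_univ:
  assumes k: "continuous_map X Y k" and gk: "\<And>x. x \<in> topspace X \<Longrightarrow> g (f x) = k x"
  shows "continuous_map (qtop X f) Y g"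
proof (rule cm_intro)
  fix c assume "c \<in> topspace (qtop X f)"
  then obtain x where x: "x \<in> topspace X" "c = f x" unfolding topspace_qtop by blast
  then show "g c \<in> topspace Y" using gk[OF x(1)] cm_top[OF k x(1)] by simp
next
  fix U assume U: "openin Y U"
  have eq: "{x \<in> topspace X. f x \<in> {c \<in> topspace (qtop X f). g c \<in> U}} = {x \<in> topspace X. k x \<in> U}"
  proof (intro set_eqI iffI)
    fix x assume "x \<in> {x \<in> topspace X. f x \<in> {c \<in> topspace (qtop X f). g c \<in> U}}"
    then show "x \<in> {x \<in> topspace X. k x \<in> U}" using gk by auto
  next
    fix x assume "x \<in> {x \<in> topspace X. k x \<in> U}"
    then show "x \<in> {x \<in> topspace X. f x \<in> {c \<in> topspace (qtop X f). g c \<in> U}}"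
      using gk unfolding topspace_qtop by auto
  qed
  have sub: "{c \<in> topspace (qtop X f). g c \<in> U} \<subseteq> f ` topspace X"
    unfolding topspace_qtop by blast
  show "openin (qtop X f) {c \<in> topspace (qtop X f). g c \<in> U}"
    unfolding openin_qtop using sub eq cm_open[OF k U] by simp
qed

lemma cont_from_sum:
  assumes "\<And>i. i \<in> I \<Longrightarrow> continuous_map (X i) Y (\<lambda>x. f (i,x))"
  shows "continuous_map (sum_topology X I) Y f"
proof (rule cm_intro)
  fix p assume "p \<in> topspace (sum_topology X I)"
  then obtain i x where p: "p = (i,x)" "i \<in> I" "x \<in> topspace (X i)" by auto
  show "f p \<in> topspace Y" using cm_top[OF assms[OF p(2)] p(3)] p(1) by simp
next
  fix U assume U: "openin Y U"
  have sl: "{x. (i, x) \<in> {p \<in> topspace (sum_topology X I). f p \<in> U}} = {x \<in> topspace (X i). f (i,x) \<in> U}"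
    if "i \<in> I" for i using that by auto
  have sub: "{p \<in> topspace (sum_topology X I). f p \<in> U} \<subseteq> Sigma I (topspace \<circ> X)" by auto
  show "openin (sum_topology X I) {p \<in> topspace (sum_topology X I). f p \<in> U}"
    unfolding openin_sum_topology using sub sl cm_open[OF assms U] by simp
qed

lemma homeo_inv_cont:
  assumes "homeomorphic_map X Y f"
  shows "continuous_map Y X (inv_into (topspace X) f)"
proof -
  obtain g where g: "homeomorphic_maps X Y f g" using assms homeomorphic_map_maps by blast
  then have gc: "continuous_map Y X g" and gf: "\<And>y. y \<in> topspace Y \<Longrightarrow> f (g y) = y"
    unfolding homeomorphic_maps_def by blast+
  have inj: "inj_on f (topspace X)" using assms homeomorphic_imp_injective_map by blast
  show ?thesis
  proof (rule continuous_map_eq[OF gc])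
    fix y assume y: "y \<in> topspace Y"
    have "g y \<in> topspace X" by (rule cm_top[OF gc y])
    then have "inv_into (topspace X) f (f (g y)) = g y" by (rule inv_into_f_f[OF inj])
    then show "g y = inv_into (topspace X) f y" using gf[OF y] by simp
  qed
qed

lemma emb_top: "embedding_map X Y f \<Longrightarrow> x \<in> topspace X \<Longrightarrow> f x \<in> topspace Y"
proof -
  assume e: "embedding_map X Y f" and x: "x \<in> topspace X"
  have "continuous_map X (subtopology Y (f ` topspace X)) f"
    using e unfolding embedding_map_def by (rule homeomorphic_imp_continuous_map)
  then have "continuous_map X Y f" by (rule continuous_map_in_subtopology[THEN iffD1, THEN conjunct1])
  then show ?thesis using x by (rule cm_top)
qed

lemma emb_inj: "embedding_map X Y f \<Longrightarrow> inj_on f (topspace X)"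
  unfolding embedding_map_def using homeomorphic_imp_injective_map by blast

lemma krelU_iff: "((I,x),(J,y)) \<in> krelU K \<longleftrightarrow>
   I \<in> kindex K \<and> J \<in> kindex K \<and> I \<subset> J \<and> x \<in> kUU K I J \<and> y = kphi K I J x"
  unfolding krelU_def by blast

lemma krelE_iff: "((I,x),(J,y)) \<in> krelE K \<longleftrightarrow>
   I \<in> kindex K \<and> J \<in> kindex K \<and> I \<subset> J \<and> x \<in> topspace (kE K I) \<and> kpr K I x \<in> kUU K I J \<and> y = kPhi K I J x"
  unfolding krelE_def by blast

lemma krelZ_iff: "((I,x),(J,y)) \<in> krelZ K \<longleftrightarrow>
   I \<in> kindex K \<and> J \<in> kindex K \<and> I \<subset> J \<and> x \<in> kUU K I J \<and> x \<in> kzs K I \<and> y = kphi K I J x"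
  unfolding krelZ_def by blast

lemma krelZ_sub: "krelZ K \<subseteq> krelU K"
  unfolding krelZ_def krelU_def by blast

definition zval :: "('x, 'u, 'e, 'z) katlas_scheme \<Rightarrow> nat set \<times> 'u \<Rightarrow> 'x option" where
  "zval K p = (if fst p \<in> kindex K \<and> snd p \<in> kzs K (fst p) then Some (kpsi K (fst p) (snd p)) else None)"

definition zsec :: "('x, 'u, 'e, 'z) katlas_scheme \<Rightarrow> nat set \<times> 'e \<Rightarrow> bool" where
  "zsec K p = (kzero K (fst p) (kpr K (fst p) (snd p)) = snd p)"

lemma zs_sub: "kzs K I \<subseteq> topspace (kU K I)"
  by (auto simp: zset_def)

locale katl =
  fixes X :: "'x topology" and K :: "('x, 'u, 'e) katlas"
  assumes A: "top_kuranishi_atlas X K"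
begin

lemma A1: "\<forall>J\<in>kindex K. kF K J = (\<Inter>i\<in>J. kF K {i}) \<and> katlas_chart X K J"
  using A unfolding top_kuranishi_atlas_def by (elim conjE) assumption
lemma A2: "(\<Union>i\<in>{1..kN K}. kF K {i}) = topspace X"
  using A unfolding top_kuranishi_atlas_def by (elim conjE) assumption
lemma A3: "\<forall>I\<in>kindex K. \<forall>J\<in>kindex K. I \<subset> J \<longrightarrow> top_coord_change K I J"
  using A unfolding top_kuranishi_atlas_def by (elim conjE) assumption

lemma chart: "I \<in> kindex K \<Longrightarrow> katlas_chart X K I"
  using A1 by blast

lemma F_eq: "I \<in> kindex K \<Longrightarrow> kF K I = (\<Inter>i\<in>I. kF K {i})"
  using A1 by blast

lemma cover: "(\<Union>i\<in>{1..kN K}. kF K {i}) = topspace X"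
  by (rule A2)

lemma cc: "I \<in> kindex K \<Longrightarrow> J \<in> kindex K \<Longrightarrow> I \<subset> J \<Longrightarrow> top_coord_change K I J"
  using A3 by blast

context fixes I assumes I: "I \<in> kindex K"
begin
lemma chartU: "top_kchart X (kF K I) (kU K I) (kE K I) (kpr K I) (kzero K I) (ks K I) (kpsi K I)"
  using chart[OF I] unfolding katlas_chart_def .
lemma F_open: "openin X (kF K I)" using chartU unfolding top_kchart_def by (elim conjE) assumption
lemma F_sub: "kF K I \<subseteq> topspace X" using F_open openin_subset by blast
lemma zcont: "continuous_map (kU K I) (kE K I) (kzero K I)"
  using chartU unfolding top_kchart_def by (elim conjE) assumption
lemma scont: "continuous_map (kU K I) (kE K I) (ks K I)"
  using chartU unfolding top_kchart_def by (elim conjE) assumption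
lemma prcont: "continuous_map (kE K I) (kU K I) (kpr K I)"
  using chartU unfolding top_kchart_def by (elim conjE) assumption
lemma przero_all: "\<forall>x\<in>topspace (kU K I). kpr K I (kzero K I x) = x"
  using chartU unfolding top_kchart_def by (elim conjE) assumption
lemma prs_all: "\<forall>x\<in>topspace (kU K I). kpr K I (ks K I x) = x"
  using chartU unfolding top_kchart_def by (elim conjE) assumption
lemma przero: "x \<in> topspace (kU K I) \<Longrightarrow> kpr K I (kzero K I x) = x"
  using przero_all by blast
lemma prs: "x \<in> topspace (kU K I) \<Longrightarrow> kpr K I (ks K I x) = x"
  using prs_all by blast
lemma psi_homeo: "homeomorphic_map (subtopology (kU K I) (kzs K I)) (subtopology X (kF K I)) (kpsi K I)"
  using chartU unfolding top_kchart_def by (elim conjE) assumption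
lemma metE: "metrizable_space (kE K I)"
  using chartU unfolding top_kchart_def by (elim conjE) assumption
lemma Haus: "Hausdorff_space (kE K I)"
  using metE by (rule metrizable_imp_Hausdorff_space)
lemma ztop: "x \<in> topspace (kU K I) \<Longrightarrow> kzero K I x \<in> topspace (kE K I)"
  by (rule cm_top[OF zcont])
lemma stop: "x \<in> topspace (kU K I) \<Longrightarrow> ks K I x \<in> topspace (kE K I)"
  by (rule cm_top[OF scont])
lemma prtop: "e \<in> topspace (kE K I) \<Longrightarrow> kpr K I e \<in> topspace (kU K I)"
  by (rule cm_top[OF prcont])
lemma psi_img: "kpsi K I ` kzs K I = kF K I"
  using homeomorphic_imp_surjective_map[OF psi_homeo]
  by (simp add: Int_absorb1[OF zs_sub] Int_absorb1[OF F_sub])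
lemma psi_inj: "inj_on (kpsi K I) (kzs K I)"
  using homeomorphic_imp_injective_map[OF psi_homeo]
  by (simp add: Int_absorb1[OF zs_sub])
lemma psi_inv1: "x \<in> kzs K I \<Longrightarrow> inv_into (kzs K I) (kpsi K I) (kpsi K I x) = x"
  using psi_inj by (simp add: inv_into_f_f)
lemma psi_inv2: "p \<in> kF K I \<Longrightarrow> inv_into (kzs K I) (kpsi K I) p \<in> kzs K I \<and> kpsi K I (inv_into (kzs K I) (kpsi K I) p) = p"
proof -
  assume p: "p \<in> kF K I"
  then have p': "p \<in> kpsi K I ` kzs K I" using psi_img by simp
  show ?thesis using inv_into_into[OF p'] f_inv_into_f[OF p'] by simp
qed
lemma psi_F: "x \<in> kzs K I \<Longrightarrow> kpsi K I x \<in> kF K I"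
  using psi_img by blast
lemma zs_closed: "closedin (kU K I) (kzs K I)"
proof -
  have "closedin (kU K I) {x \<in> topspace (kU K I). ks K I x = kzero K I x}"
    by (rule closedin_continuous_maps_eq[OF Haus scont zcont])
  then show ?thesis by (simp add: zset_def)
qed
lemma psi_cont: "continuous_map (subtopology (kU K I) (kzs K I)) X (kpsi K I)"
  using homeomorphic_imp_continuous_map[OF psi_homeo] by (rule continuous_map_in_subtopology[THEN iffD1, THEN conjunct1])
lemma psiinv_cont: "continuous_map (subtopology X (kF K I)) (kU K I) (inv_into (kzs K I) (kpsi K I))"
proof -
  have "continuous_map (subtopology X (kF K I)) (subtopology (kU K I) (kzs K I)) (inv_into (kzs K I) (kpsi K I))"
    using homeo_inv_cont[OF psi_homeo] by (simp add: Int_absorb1[OF zs_sub])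
  then show ?thesis by (rule continuous_map_in_subtopology[THEN iffD1, THEN conjunct1])
qed
end

context fixes I J assumes I: "I \<in> kindex K" and J: "J \<in> kindex K" and IJ: "I \<subset> J"
begin
lemma ccU: "top_coord_change K I J" by (rule cc[OF I J IJ])
lemma UU_open: "openin (kU K I) (kUU K I J)" using ccU unfolding top_coord_change_def by (elim conjE) assumption
lemma UU_sub: "kUU K I J \<subseteq> topspace (kU K I)" using UU_open openin_subset by blast
lemma phi_emb: "embedding_map (subtopology (kU K I) (kUU K I J)) (kU K J) (kphi K I J)"
  using ccU unfolding top_coord_change_def by (elim conjE) assumption
lemma Phi_emb: "embedding_map (subtopology (kE K I) {e \<in> topspace (kE K I). kpr K I e \<in> kUU K I J}) (kE K J) (kPhi K I J)"
  using ccU unfolding top_coord_change_def by (elim conjE) assumption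
lemma phi_top: "x \<in> kUU K I J \<Longrightarrow> kphi K I J x \<in> topspace (kU K J)"
proof -
  assume x: "x \<in> kUU K I J"
  then have "x \<in> topspace (subtopology (kU K I) (kUU K I J))" using UU_sub by auto
  then show ?thesis by (rule emb_top[OF phi_emb])
qed
lemma Phi_top: "e \<in> topspace (kE K I) \<Longrightarrow> kpr K I e \<in> kUU K I J \<Longrightarrow> kPhi K I J e \<in> topspace (kE K J)"
proof -
  assume "e \<in> topspace (kE K I)" "kpr K I e \<in> kUU K I J"
  then have "e \<in> topspace (subtopology (kE K I) {e \<in> topspace (kE K I). kpr K I e \<in> kUU K I J})" by simp
  then show ?thesis by (rule emb_top[OF Phi_emb])
qed
lemma Phi_inj: "inj_on (kPhi K I J) {e \<in> topspace (kE K I). kpr K I e \<in> kUU K I J}"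
proof -
  have "inj_on (kPhi K I J) (topspace (subtopology (kE K I) {e \<in> topspace (kE K I). kpr K I e \<in> kUU K I J}))"
    by (rule emb_inj[OF Phi_emb])
  moreover have "topspace (subtopology (kE K I) {e \<in> topspace (kE K I). kpr K I e \<in> kUU K I J}) = {e \<in> topspace (kE K I). kpr K I e \<in> kUU K I J}"
    by auto
  ultimately show ?thesis by simp
qed
lemma cc_pr_all: "\<forall>e\<in>topspace (kE K I). kpr K I e \<in> kUU K I J \<longrightarrow> kpr K J (kPhi K I J e) = kphi K I J (kpr K I e)"
  using ccU unfolding top_coord_change_def by (elim conjE) assumption
lemma cc_zero_all: "\<forall>x\<in>kUU K I J. kzero K J (kphi K I J x) = kPhi K I J (kzero K I x)"
  using ccU unfolding top_coord_change_def by (elim conjE) assumption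
lemma cc_s_all: "\<forall>x\<in>kUU K I J. ks K J (kphi K I J x) = kPhi K I J (ks K I x)"
  using ccU unfolding top_coord_change_def by (elim conjE) assumption
lemma cc_psi_all: "\<forall>x\<in>kUU K I J \<inter> kzs K I. kphi K I J x = inv_into (kzs K J) (kpsi K J) (kpsi K I x)"
  using ccU unfolding top_coord_change_def by (elim conjE) assumption
lemma cc_UUzs_eq: "kUU K I J \<inter> kzs K I = {x \<in> kzs K I. kpsi K I x \<in> kF K I \<inter> kF K J}"
  using ccU unfolding top_coord_change_def by (elim conjE) assumption
lemma cc_pr: "e \<in> topspace (kE K I) \<Longrightarrow> kpr K I e \<in> kUU K I J \<Longrightarrow> kpr K J (kPhi K I J e) = kphi K I J (kpr K I e)"
  using cc_pr_all by blast
lemma cc_zero: "x \<in> kUU K I J \<Longrightarrow> kzero K J (kphi K I J x) = kPhi K I J (kzero K I x)"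
  using cc_zero_all by blast
lemma cc_s: "x \<in> kUU K I J \<Longrightarrow> ks K J (kphi K I J x) = kPhi K I J (ks K I x)"
  using cc_s_all by blast
lemma cc_UUzs: "x \<in> kzs K I \<Longrightarrow> x \<in> kUU K I J \<longleftrightarrow> kpsi K I x \<in> kF K J"
proof -
  note cc_UUzs_eq
  moreover assume "x \<in> kzs K I"
  ultimately show ?thesis using psi_F[OF I] by blast
qed
lemma cc_psi: "x \<in> kUU K I J \<Longrightarrow> x \<in> kzs K I \<Longrightarrow> kphi K I J x = inv_into (kzs K J) (kpsi K J) (kpsi K I x)"
  using cc_psi_all by blast

lemma edge_zero: 
  assumes x: "x \<in> kUU K I J"
  shows "kphi K I J x \<in> kzs K J \<longleftrightarrow> x \<in> kzs K I"
proof -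
  have xt: "x \<in> topspace (kU K I)" using x UU_sub by blast
  have D: "ks K I x \<in> {e \<in> topspace (kE K I). kpr K I e \<in> kUU K I J}"
          "kzero K I x \<in> {e \<in> topspace (kE K I). kpr K I e \<in> kUU K I J}"
    using xt x stop[OF I] ztop[OF I] prs[OF I] przero[OF I] by auto
  have "kphi K I J x \<in> kzs K J \<longleftrightarrow> kPhi K I J (ks K I x) = kPhi K I J (kzero K I x)"
    using phi_top[OF x] cc_s[OF x] cc_zero[OF x] by (simp add: zset_def)
  also have "\<dots> \<longleftrightarrow> ks K I x = kzero K I x"
    using inj_on_eq_iff[OF Phi_inj D] .
  finally show ?thesis using xt by (simp add: zset_def)
qed
end


abbreviation RU where "RU \<equiv> (krelU K \<union> (krelU K)\<inverse>)\<^sup>*"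
abbreviation RE where "RE \<equiv> (krelE K \<union> (krelE K)\<inverse>)\<^sup>*"
abbreviation RZ where "RZ \<equiv> (krelZ K \<union> (krelZ K)\<inverse>)\<^sup>*"
abbreviation Sz where "Sz \<equiv> (SIGMA I:kindex K. kzs K I)"

lemma top_disjU: "topspace (kdisjU K) = (SIGMA I:kindex K. topspace (kU K I))"
  by (simp add: kdisjU_def o_def)
lemma top_disjE: "topspace (kdisjE K) = (SIGMA I:kindex K. topspace (kE K I))"
  by (simp add: kdisjE_def o_def)

lemma edgeU:
  assumes "(a,b) \<in> krelU K"
  shows "a \<in> topspace (kdisjU K) \<and> b \<in> topspace (kdisjU K) \<and> zval K a = zval K b"
proof -
  obtain I x where a: "a = (I,x)" by (cases a)
  obtain J y where b: "b = (J,y)" by (cases b)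
  have h: "I \<in> kindex K" "J \<in> kindex K" "I \<subset> J" "x \<in> kUU K I J" "y = kphi K I J x"
    using assms unfolding a b krelU_iff by auto
  have xt: "x \<in> topspace (kU K I)" using UU_sub[OF h(1-3)] h(4) by blast
  have yt: "y \<in> topspace (kU K J)" using phi_top[OF h(1-3) h(4)] h(5) by simp
  have zz: "y \<in> kzs K J \<longleftrightarrow> x \<in> kzs K I" using edge_zero[OF h(1-3) h(4)] h(5) by simp
  have pp: "kpsi K J y = kpsi K I x" if "x \<in> kzs K I"
  proof -
    have "kpsi K I x \<in> kF K J" using cc_UUzs[OF h(1-3) that] h(4) by simp
    then show ?thesis using h(5) cc_psi[OF h(1-3) h(4) that] psi_inv2[OF h(2)] by simp
  qed
  show ?thesis using a b h xt yt zz pp by (auto simp: top_disjU zval_def)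
qed

lemma chainU: "(a,b) \<in> RU \<Longrightarrow> zval K a = zval K b"
  by (rule rt_inv[of "krelU K"]) (use edgeU in blast)

lemma edgeE:
  assumes "(a,b) \<in> krelE K"
  shows "zsec K a = zsec K b"
proof -
  obtain I e where a: "a = (I,e)" by (cases a)
  obtain J f where b: "b = (J,f)" by (cases b)
  have h: "I \<in> kindex K" "J \<in> kindex K" "I \<subset> J" "e \<in> topspace (kE K I)" "kpr K I e \<in> kUU K I J" "f = kPhi K I J e"
    using assms unfolding a b krelE_iff by auto
  have pt: "kpr K I e \<in> topspace (kU K I)" using prtop[OF h(1) h(4)] .
  have D: "e \<in> {e \<in> topspace (kE K I). kpr K I e \<in> kUU K I J}"
     "kzero K I (kpr K I e) \<in> {e \<in> topspace (kE K I). kpr K I e \<in> kUU K I J}"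
    using h pt ztop[OF h(1) pt] przero[OF h(1) pt] by auto
  have "zsec K b \<longleftrightarrow> kzero K J (kphi K I J (kpr K I e)) = kPhi K I J e"
    using b h cc_pr[OF h(1-3) h(4) h(5)] by (simp add: zsec_def)
  also have "\<dots> \<longleftrightarrow> kPhi K I J (kzero K I (kpr K I e)) = kPhi K I J e"
    using cc_zero[OF h(1-3) h(5)] by simp
  also have "\<dots> \<longleftrightarrow> kzero K I (kpr K I e) = e"
    using inj_on_eq_iff[OF Phi_inj[OF h(1-3)] D(2) D(1)] .
  finally show ?thesis using a by (simp add: zsec_def)
qed

lemma chainE: "(a,b) \<in> RE \<Longrightarrow> zsec K a = zsec K b"
  by (rule rt_inv[of "krelE K"]) (use edgeE in blast)

lemma edge_pr: "(a,b) \<in> krelE K \<Longrightarrow> (kprD K a, kprD K b) \<in> RU"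
proof -
  assume ab: "(a,b) \<in> krelE K"
  obtain I e where a: "a = (I,e)" by (cases a)
  obtain J f where b: "b = (J,f)" by (cases b)
  have h: "I \<in> kindex K" "J \<in> kindex K" "I \<subset> J" "e \<in> topspace (kE K I)" "kpr K I e \<in> kUU K I J" "f = kPhi K I J e"
    using ab unfolding a b krelE_iff by auto
  have "(kprD K a, kprD K b) \<in> krelU K"
    using h a b cc_pr[OF h(1-3) h(4) h(5)] by (simp add: kprD_def krelU_iff)
  then show ?thesis by blast
qed

lemma edge_zs: "(a,b) \<in> krelU K \<Longrightarrow> (kzeroD K a, kzeroD K b) \<in> RE \<and> (ksD K a, ksD K b) \<in> RE"
proof -
  assume ab: "(a,b) \<in> krelU K"
  obtain I x where a: "a = (I,x)" by (cases a)
  obtain J y where b: "b = (J,y)" by (cases b)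
  have h: "I \<in> kindex K" "J \<in> kindex K" "I \<subset> J" "x \<in> kUU K I J" "y = kphi K I J x"
    using ab unfolding a b krelU_iff by auto
  have xt: "x \<in> topspace (kU K I)" using UU_sub[OF h(1-3)] h(4) by blast
  have "(kzeroD K a, kzeroD K b) \<in> krelE K"
    using h a b cc_zero[OF h(1-3) h(4)] ztop[OF h(1) xt] przero[OF h(1) xt]
    by (simp add: kzeroD_def krelE_iff)
  moreover have "(ksD K a, ksD K b) \<in> krelE K"
    using h a b cc_s[OF h(1-3) h(4)] stop[OF h(1) xt] prs[OF h(1) xt]
    by (simp add: ksD_def krelE_iff)
  ultimately show ?thesis by blast
qed

lemma claim1: "(p,q) \<in> RE \<Longrightarrow> kpiK K (kprD K p) = kpiK K (kprD K q)"
  unfolding kpiK_def by (rule eqclass_eq, rule rt_map[of "krelE K"]) (use edge_pr in auto)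

lemma claim2: "(p,q) \<in> RU \<Longrightarrow> kpiE K (kzeroD K p) = kpiE K (kzeroD K q) \<and> kpiE K (ksD K p) = kpiE K (ksD K q)"
proof -
  assume pq: "(p,q) \<in> RU"
  have 1: "(kzeroD K p, kzeroD K q) \<in> RE"
    by (rule rt_map[of "krelU K", OF _ pq]) (erule edge_zs[THEN conjunct1])
  have 2: "(ksD K p, ksD K q) \<in> RE"
    by (rule rt_map[of "krelU K", OF _ pq]) (erule edge_zs[THEN conjunct2])
  show ?thesis unfolding kpiE_def using eqclass_eq[OF 1] eqclass_eq[OF 2] by (rule conjI)
qed

lemma prV_eq: "kprV K (kpiE K p) = kpiK K (kprD K p)"
proof -
  have "(SOME q. q \<in> kpiE K p) \<in> kpiE K p"
    by (rule someI[of _ p]) (simp add: kpiE_def eqclass_self)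
  then have "(p, SOME q. q \<in> kpiE K p) \<in> RE" by (simp add: kpiE_def eqclass_mem)
  then show ?thesis unfolding kprV_def using claim1 by metis
qed

lemma zV_eq: "kzeroV K (kpiK K p) = kpiE K (kzeroD K p) \<and> ksV K (kpiK K p) = kpiE K (ksD K p)"
proof -
  have "(SOME q. q \<in> kpiK K p) \<in> kpiK K p"
    by (rule someI[of _ p]) (simp add: kpiK_def eqclass_self)
  then have "(p, SOME q. q \<in> kpiK K p) \<in> RU" by (simp add: kpiK_def eqclass_mem)
  then show ?thesis unfolding kzeroV_def ksV_def using claim2 by metis
qed

lemma cont_kpiK: "continuous_map (kdisjU K) (kvirt K) (kpiK K)"
  unfolding kvirt_def by (rule qtop_cont)
lemma cont_kpiE: "continuous_map (kdisjE K) (kvirtE K) (kpiE K)"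
  unfolding kvirtE_def by (rule qtop_cont)

lemma cont_prD: "continuous_map (kdisjE K) (kdisjU K) (kprD K)"
  unfolding kdisjE_def
proof (rule cont_from_sum)
  fix I assume I: "I \<in> kindex K"
  have "continuous_map (kE K I) (kdisjU K) ((\<lambda>x. (I,x)) \<circ> kpr K I)"
    unfolding kdisjU_def by (rule continuous_map_compose[OF prcont[OF I] continuous_map_component_injection[where X="kU K", OF I]])
  then show "continuous_map (kE K I) (kdisjU K) (\<lambda>x. kprD K (I, x))"
    by (simp add: kprD_def o_def)
qed

lemma cont_zD: "continuous_map (kdisjU K) (kdisjE K) (kzeroD K)"
  unfolding kdisjU_def
proof (rule cont_from_sum)
  fix I assume I: "I \<in> kindex K"
  have "continuous_map (kU K I) (kdisjE K) ((\<lambda>x. (I,x)) \<circ> kzero K I)"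
    unfolding kdisjE_def by (rule continuous_map_compose[OF zcont[OF I] continuous_map_component_injection[where X="kE K", OF I]])
  then show "continuous_map (kU K I) (kdisjE K) (\<lambda>x. kzeroD K (I, x))"
    by (simp add: kzeroD_def o_def)
qed

lemma cont_sD: "continuous_map (kdisjU K) (kdisjE K) (ksD K)"
  unfolding kdisjU_def
proof (rule cont_from_sum)
  fix I assume I: "I \<in> kindex K"
  have "continuous_map (kU K I) (kdisjE K) ((\<lambda>x. (I,x)) \<circ> ks K I)"
    unfolding kdisjE_def by (rule continuous_map_compose[OF scont[OF I] continuous_map_component_injection[where X="kE K", OF I]])
  then show "continuous_map (kU K I) (kdisjE K) (\<lambda>x. ksD K (I, x))"
    by (simp add: ksD_def o_def)
qed

lemma claim3: "continuous_map (kvirtE K) (kvirt K) (kprV K)"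
  unfolding kvirtE_def
  by (rule qtop_univ[OF continuous_map_compose[OF cont_prD cont_kpiK]]) (simp add: prV_eq)

lemma claim4: "continuous_map (kvirt K) (kvirtE K) (kzeroV K)"
  unfolding kvirt_def
  by (rule qtop_univ[OF continuous_map_compose[OF cont_zD cont_kpiE]]) (simp add: zV_eq)

lemma claim5: "continuous_map (kvirt K) (kvirtE K) (ksV K)"
  unfolding kvirt_def
  by (rule qtop_univ[OF continuous_map_compose[OF cont_sD cont_kpiE]]) (simp add: zV_eq)

lemma top_virt: "topspace (kvirt K) = kpiK K ` topspace (kdisjU K)"
  by (simp add: kvirt_def topspace_qtop)

lemma claim6: "c \<in> topspace (kvirt K) \<Longrightarrow> kprV K (ksV K c) = c \<and> kprV K (kzeroV K c) = c"
proof -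
  assume "c \<in> topspace (kvirt K)"
  then obtain I x where c: "c = kpiK K (I,x)" and I: "I \<in> kindex K" and x: "x \<in> topspace (kU K I)"
    by (auto simp: top_virt top_disjU)
  show ?thesis using c zV_eq prV_eq prs[OF I x] przero[OF I x]
    by (simp add: kprD_def ksD_def kzeroD_def)
qed

lemma claim7: "{c \<in> topspace (kvirt K). ksV K c = kzeroV K c} = kpiK K ` Sz"
proof (intro set_eqI iffI)
  fix c assume "c \<in> {c \<in> topspace (kvirt K). ksV K c = kzeroV K c}"
  then obtain I x where c: "c = kpiK K (I,x)" and I: "I \<in> kindex K" and x: "x \<in> topspace (kU K I)"
    and eq: "ksV K c = kzeroV K c"
    by (auto simp: top_virt top_disjU)
  have "kpiE K (I, ks K I x) = kpiE K (I, kzero K I x)"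
    using eq c zV_eq by (simp add: ksD_def kzeroD_def)
  then have "((I, ks K I x), (I, kzero K I x)) \<in> RE" by (simp add: kpiE_def eqclass_eq_iff)
  then have "zsec K (I, ks K I x) = zsec K (I, kzero K I x)" by (rule chainE)
  then have "ks K I x = kzero K I x" using przero[OF I x] prs[OF I x] by (simp add: zsec_def)
  then have "x \<in> kzs K I" using x by (simp add: zset_def)
  then show "c \<in> kpiK K ` Sz" using c I by blast
next
  fix c assume "c \<in> kpiK K ` Sz"
  then obtain I x where c: "c = kpiK K (I,x)" and I: "I \<in> kindex K" and x: "x \<in> kzs K I" by blast
  have xt: "x \<in> topspace (kU K I)" using x zs_sub[of K I] by blast
  have "ks K I x = kzero K I x" using x by (simp add: zset_def)
  then have "ksV K c = kzeroV K c" using c zV_eq by (simp add: ksD_def kzeroD_def)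
  moreover have "c \<in> topspace (kvirt K)" using c I xt by (auto simp: top_virt top_disjU)
  ultimately show "c \<in> {c \<in> topspace (kvirt K). ksV K c = kzeroV K c}" by blast
qed


abbreviation can where "can I p \<equiv> (I, inv_into (kzs K I) (kpsi K I) p)"

lemma RZ_sub: "RZ \<subseteq> RU"
  by (rule rtrancl_mono) (use krelZ_sub in blast)

lemma L5:
  assumes I: "I \<in> kindex K" and L: "L \<in> kindex K" and IL: "I \<subseteq> L" and p: "p \<in> kF K I" "p \<in> kF K L"
  shows "(can I p, can L p) \<in> RZ"
proof (cases "I = L")
  case True then show ?thesis by simp
next
  case False
  then have IL': "I \<subset> L" using IL by blast
  define x where "x = inv_into (kzs K I) (kpsi K I) p"
  have x: "x \<in> kzs K I" "kpsi K I x = p" using psi_inv2[OF I p(1)] x_def by auto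
  have xu: "x \<in> kUU K I L" using cc_UUzs[OF I L IL' x(1)] x(2) p(2) by simp
  have "kphi K I L x = inv_into (kzs K L) (kpsi K L) p" using cc_psi[OF I L IL' xu x(1)] x(2) by simp
  then have "(can I p, can L p) \<in> krelZ K" using I L IL' xu x(1) x_def by (simp add: krelZ_iff)
  then show ?thesis by blast
qed

lemma union_idx:
  assumes I: "I \<in> kindex K" and J: "J \<in> kindex K" and p: "p \<in> kF K I" "p \<in> kF K J"
  shows "I \<union> J \<in> kindex K \<and> p \<in> kF K (I \<union> J)"
proof -
  have "p \<in> (\<Inter>i\<in>I. kF K {i})" "p \<in> (\<Inter>i\<in>J. kF K {i})" using F_eq[OF I] F_eq[OF J] p by auto
  then have pp: "p \<in> (\<Inter>i\<in>I \<union> J. kF K {i})" by blast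
  have u: "I \<union> J \<in> kindex K" using I J pp by (auto simp: kindex_def)
  show ?thesis using u pp F_eq[OF u] by simp
qed

lemma can_conn:
  assumes I: "I \<in> kindex K" and J: "J \<in> kindex K" and p: "p \<in> kF K I" "p \<in> kF K J"
  shows "(can I p, can J p) \<in> RZ"
proof -
  have u: "I \<union> J \<in> kindex K" "p \<in> kF K (I \<union> J)" using union_idx[OF I J p] by auto
  have 1: "(can I p, can (I \<union> J) p) \<in> RZ" by (rule L5[OF I u(1) _ p(1) u(2)]) blast
  have 2: "(can J p, can (I \<union> J) p) \<in> RZ" by (rule L5[OF J u(1) _ p(2) u(2)]) blast
  show ?thesis using rtrancl_trans[OF 1 sym_rt[OF 2]] .
qed

lemma claim9: "I \<in> kindex K \<Longrightarrow> J \<in> kindex K \<Longrightarrow> p \<in> kF K I \<Longrightarrow> p \<in> kF K J \<Longrightarrow> kiotaI K I p = kiotaI K J p"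
proof -
  assume a: "I \<in> kindex K" "J \<in> kindex K" "p \<in> kF K I" "p \<in> kF K J"
  have "(can I p, can J p) \<in> RZ" by (rule can_conn[OF a])
  then have "(can I p, can J p) \<in> RU" by (rule subsetD[OF RZ_sub])
  then show ?thesis unfolding kiotaI_def kpiK_def by (rule eqclass_eq)
qed

lemma ex_idx: "p \<in> topspace X \<Longrightarrow> \<exists>I\<in>kindex K. p \<in> kF K I"
proof -
  assume "p \<in> topspace X"
  then obtain i where i: "i \<in> {1..kN K}" "p \<in> kF K {i}" using cover by blast
  have "{i} \<in> kindex K" using i by (auto simp: kindex_def)
  then show ?thesis using i by blast
qed

lemma iota_eq: "I \<in> kindex K \<Longrightarrow> p \<in> kF K I \<Longrightarrow> kiota K p = kpiK K (can I p)"
proof -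
  assume I: "I \<in> kindex K" and p: "p \<in> kF K I"
  let ?J = "SOME J. J \<in> kindex K \<and> p \<in> kF K J"
  have J: "?J \<in> kindex K \<and> p \<in> kF K ?J" by (rule someI[of _ I]) (use I p in blast)
  have "kiota K p = kiotaI K ?J p" by (simp add: kiota_def)
  also have "\<dots> = kiotaI K I p" using claim9 J I p by blast
  finally show ?thesis by (simp add: kiotaI_def)
qed

lemma zval_can: "I \<in> kindex K \<Longrightarrow> p \<in> kF K I \<Longrightarrow> zval K (can I p) = Some p"
  using psi_inv2 by (simp add: zval_def)

lemma can_Sz: "I \<in> kindex K \<Longrightarrow> p \<in> kF K I \<Longrightarrow> can I p \<in> Sz"
  using psi_inv2 by blast

lemma iota_img: "kiota K ` topspace X = kpiK K ` Sz"
proof (intro set_eqI iffI)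
  fix c assume "c \<in> kiota K ` topspace X"
  then obtain p where p: "p \<in> topspace X" "c = kiota K p" by blast
  obtain I where I: "I \<in> kindex K" "p \<in> kF K I" using ex_idx[OF p(1)] by blast
  show "c \<in> kpiK K ` Sz" using iota_eq[OF I] can_Sz[OF I] p(2) by blast
next
  fix c assume "c \<in> kpiK K ` Sz"
  then obtain I x where c: "c = kpiK K (I,x)" and I: "I \<in> kindex K" and x: "x \<in> kzs K I" by blast
  have pF: "kpsi K I x \<in> kF K I" using psi_F[OF I x] .
  have "kiota K (kpsi K I x) = c" using iota_eq[OF I pF] psi_inv1[OF I x] c by simp
  moreover have "kpsi K I x \<in> topspace X" using pF F_sub[OF I] by blast
  ultimately show "c \<in> kiota K ` topspace X" by blast
qed

lemma iota_inj: "inj_on (kiota K) (topspace X)"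
proof (rule inj_onI)
  fix p q assume p: "p \<in> topspace X" and q: "q \<in> topspace X" and eq: "kiota K p = kiota K q"
  obtain I where I: "I \<in> kindex K" "p \<in> kF K I" using ex_idx[OF p] by blast
  obtain J where J: "J \<in> kindex K" "q \<in> kF K J" using ex_idx[OF q] by blast
  have "kpiK K (can I p) = kpiK K (can J q)" using eq iota_eq[OF I] iota_eq[OF J] by simp
  then have "(can I p, can J q) \<in> RU" by (simp add: kpiK_def eqclass_eq_iff)
  then have "zval K (can I p) = zval K (can J q)" by (rule chainU)
  then show "p = q" using zval_can[OF I] zval_can[OF J] by simp
qed

lemma iota_cont: "continuous_map X (kvirt K) (kiota K)"
  unfolding continuous_map_def
proof (intro conjI allI impI)
  show "kiota K \<in> topspace X \<rightarrow> topspace (kvirt K)"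
    using iota_img claim7 by blast
  fix V assume V: "openin (kvirt K) V"
  have loc: "openin X {p \<in> topspace (subtopology X (kF K I)). kpiK K (can I p) \<in> V}" if I: "I \<in> kindex K" for I
  proof -
    have "continuous_map (subtopology X (kF K I)) (kvirt K) (kpiK K \<circ> (\<lambda>x. (I,x)) \<circ> inv_into (kzs K I) (kpsi K I))"
      by (intro continuous_map_compose[OF psiinv_cont[OF I]] continuous_map_compose[OF _ cont_kpiK])
         (simp add: kdisjU_def continuous_map_component_injection[where X="kU K", OF I])
    then have "openin (subtopology X (kF K I)) {p \<in> topspace (subtopology X (kF K I)). kpiK K (can I p) \<in> V}"
      using V by (simp add: continuous_map_def o_def)
    then show ?thesis using openin_trans_full F_open[OF I] by blast
  qed
  have "{p \<in> topspace X. kiota K p \<in> V} = (\<Union>I\<in>kindex K. {p \<in> topspace (subtopology X (kF K I)). kpiK K (can I p) \<in> V})"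
  proof (intro set_eqI iffI)
    fix p assume "p \<in> {p \<in> topspace X. kiota K p \<in> V}"
    then have p: "p \<in> topspace X" "kiota K p \<in> V" by auto
    obtain I where I: "I \<in> kindex K" "p \<in> kF K I" using ex_idx[OF p(1)] by blast
    show "p \<in> (\<Union>I\<in>kindex K. {p \<in> topspace (subtopology X (kF K I)). kpiK K (can I p) \<in> V})"
      using I p iota_eq[OF I] by auto
  next
    fix p assume "p \<in> (\<Union>I\<in>kindex K. {p \<in> topspace (subtopology X (kF K I)). kpiK K (can I p) \<in> V})"
    then obtain I where I: "I \<in> kindex K" "p \<in> kF K I" "p \<in> topspace X" "kpiK K (can I p) \<in> V" by auto
    then show "p \<in> {p \<in> topspace X. kiota K p \<in> V}" using iota_eq[OF I(1,2)] by simp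
  qed
  then show "openin X {p \<in> topspace X. kiota K p \<in> V}" using loc by auto
qed

lemma iota_open: "openin X W \<Longrightarrow> openin (subtopology (kvirt K) (kpiK K ` Sz)) (kiota K ` W)"
proof -
  assume W: "openin X W"
  define C where "C = topspace X - W"
  have Cc: "closedin X C" using W C_def by (simp add: closedin_diff)
  define Q where "Q = {a. zval K a \<in> Some ` C}"
  have Qsat: "a \<in> Q" if "(q, a) \<in> RU" "q \<in> Q" for q a
    using chainU[OF that(1)] that(2) by (simp add: Q_def)
  have Qsub: "Q \<subseteq> topspace (kdisjU K)"
  proof
    fix a assume aQ: "a \<in> Q"
    obtain I x where a: "a = (I,x)" by (cases a)
    have ix: "I \<in> kindex K \<and> x \<in> kzs K I" using aQ unfolding a Q_def zval_def by (auto split: if_splits)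
    then show "a \<in> topspace (kdisjU K)" using zs_sub[of K I] a by (auto simp: top_disjU)
  qed
  have Qcl: "closedin (kdisjU K) Q"
    unfolding kdisjU_def closedin_sum_topology
  proof (intro conjI ballI)
    show "Q \<subseteq> Sigma (kindex K) (topspace \<circ> kU K)" using Qsub by (simp add: top_disjU o_def)
    fix I assume I: "I \<in> kindex K"
    have "{x. (I,x) \<in> Q} = {x \<in> topspace (subtopology (kU K I) (kzs K I)). kpsi K I x \<in> C}"
      using I zs_sub[of K I] by (auto simp: Q_def zval_def)
    moreover have "closedin (subtopology (kU K I) (kzs K I)) {x \<in> topspace (subtopology (kU K I) (kzs K I)). kpsi K I x \<in> C}"
      by (rule closedin_continuous_map_preimage[OF psi_cont[OF I] Cc])
    ultimately show "closedin (kU K I) {x. (I,x) \<in> Q}"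
      using closedin_trans_full zs_closed[OF I] by metis
  qed
  define V where "V = topspace (kvirt K) - kpiK K ` Q"
  have pre: "{a \<in> topspace (kdisjU K). kpiK K a \<in> V} = topspace (kdisjU K) - Q"
  proof (intro set_eqI iffI)
    fix a assume "a \<in> {a \<in> topspace (kdisjU K). kpiK K a \<in> V}"
    then have a: "a \<in> topspace (kdisjU K)" "kpiK K a \<notin> kpiK K ` Q" by (auto simp: V_def)
    then show "a \<in> topspace (kdisjU K) - Q" by blast
  next
    fix a assume a: "a \<in> topspace (kdisjU K) - Q"
    have "kpiK K a \<notin> kpiK K ` Q"
    proof
      assume "kpiK K a \<in> kpiK K ` Q"
      then obtain q where q: "q \<in> Q" "kpiK K a = kpiK K q" by blast
      then have "(a, q) \<in> RU" by (simp add: kpiK_def eqclass_eq_iff)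
      then have "(q, a) \<in> RU" by (rule sym_rt)
      then show False using Qsat q a by blast
    qed
    then show "a \<in> {a \<in> topspace (kdisjU K). kpiK K a \<in> V}"
      using a by (auto simp: V_def top_virt)
  qed
  have Vo: "openin (kvirt K) V"
    unfolding kvirt_def openin_qtop
  proof
    show "V \<subseteq> kpiK K ` topspace (kdisjU K)" by (auto simp: V_def top_virt)
    show "openin (kdisjU K) {x \<in> topspace (kdisjU K). kpiK K x \<in> V}"
      using pre Qcl by (simp add: closedin_def)
  qed
  have key: "kiota K p \<in> V \<longleftrightarrow> p \<in> W" if p: "p \<in> topspace X" for p
  proof -
    obtain I where I: "I \<in> kindex K" "p \<in> kF K I" using ex_idx[OF p] by blast
    have it: "kiota K p = kpiK K (can I p)" using iota_eq[OF I] .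
    have tp: "kiota K p \<in> topspace (kvirt K)" by (rule cm_top[OF iota_cont p])
    have "kiota K p \<in> kpiK K ` Q \<longleftrightarrow> p \<in> C"
    proof
      assume "kiota K p \<in> kpiK K ` Q"
      then obtain q where q: "q \<in> Q" "kpiK K (can I p) = kpiK K q" using it by auto
      then have "(can I p, q) \<in> RU" by (simp add: kpiK_def eqclass_eq_iff)
      then have "(q, can I p) \<in> RU" by (rule sym_rt)
      then have "can I p \<in> Q" using Qsat q by blast
      then show "p \<in> C" using zval_can[OF I] by (auto simp: Q_def)
    next
      assume "p \<in> C"
      then have "can I p \<in> Q" using zval_can[OF I] by (simp add: Q_def)
      then show "kiota K p \<in> kpiK K ` Q" using it by blast
    qed
    then show ?thesis using tp p by (auto simp: V_def C_def)
  qed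
  have eqV: "kiota K ` W = V \<inter> kpiK K ` Sz"
  proof -
    have "kiota K ` W = V \<inter> kiota K ` topspace X"
    proof (intro set_eqI iffI)
      fix y assume "y \<in> kiota K ` W"
      then obtain p where p: "p \<in> W" "y = kiota K p" by blast
      have pt: "p \<in> topspace X" using openin_subset[OF W] p(1) by blast
      show "y \<in> V \<inter> kiota K ` topspace X" using key[OF pt] p pt by blast
    next
      fix y assume "y \<in> V \<inter> kiota K ` topspace X"
      then obtain p where p: "p \<in> topspace X" "y = kiota K p" "y \<in> V" by blast
      then show "y \<in> kiota K ` W" using key[OF p(1)] by blast
    qed
    then show ?thesis using iota_img by simp
  qed
  show ?thesis unfolding openin_subtopology by (intro exI[of _ V] conjI Vo eqV)
qed

lemma Sz_top: "kpiK K ` Sz \<subseteq> topspace (kvirt K)"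
proof
  fix c assume "c \<in> kpiK K ` Sz"
  then obtain I x where c: "c = kpiK K (I,x)" and I: "I \<in> kindex K" and x: "x \<in> kzs K I" by blast
  have "(I,x) \<in> topspace (kdisjU K)" using I x zs_sub[of K I] by (auto simp: top_disjU)
  then show "c \<in> topspace (kvirt K)" using c by (simp add: top_virt)
qed

lemma claim10: "homeomorphic_map X (subtopology (kvirt K) (kpiK K ` Sz)) (kiota K)"
proof (rule bijective_open_imp_homeomorphic_map)
  show "continuous_map X (subtopology (kvirt K) (kpiK K ` Sz)) (kiota K)"
    using iota_cont iota_img unfolding continuous_map_in_subtopology by blast
  show "open_map X (subtopology (kvirt K) (kpiK K ` Sz)) (kiota K)"
    using iota_open by (simp add: open_map_def)
  show "kiota K ` topspace X = topspace (subtopology (kvirt K) (kpiK K ` Sz))"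
    using iota_img Sz_top by (simp add: Int_absorb1)
  show "inj_on (kiota K) (topspace X)" by (rule iota_inj)
qed


lemma Sz_sub: "Sz \<subseteq> topspace (kdisjU K)"
proof
  fix a assume "a \<in> Sz"
  then obtain I x where a: "a = (I,x)" "I \<in> kindex K" "x \<in> kzs K I" by blast
  then show "a \<in> topspace (kdisjU K)" using zs_sub[of K I] by (auto simp: top_disjU)
qed

lemma top_disjZ: "topspace (kdisjZ K) = Sz"
  unfolding kdisjZ_def topspace_subtopology using Sz_sub by (rule Int_absorb1)

lemma top_quotZ: "topspace (kquotZ K) = eqclass (krelZ K) ` Sz"
  unfolding kquotZ_def topspace_qtop top_disjZ ..

lemma hz: "RU `` eqclass (krelZ K) a = kpiK K a"
proof (intro set_eqI iffI)
  fix y assume "y \<in> RU `` eqclass (krelZ K) a"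
  then obtain z where z: "z \<in> eqclass (krelZ K) a" "(z,y) \<in> RU" by blast
  from z(1) have "(a,z) \<in> RZ" by (simp add: eqclass_mem)
  then have "(a,z) \<in> RU" by (rule subsetD[OF RZ_sub])
  then have "(a,y) \<in> RU" using z(2) by (rule rtrancl_trans)
  then show "y \<in> kpiK K a" by (simp add: kpiK_def eqclass_mem)
next
  fix y assume "y \<in> kpiK K a"
  then have "(a,y) \<in> RU" by (simp add: kpiK_def eqclass_mem)
  moreover have "a \<in> eqclass (krelZ K) a" by (rule eqclass_self)
  ultimately show "y \<in> RU `` eqclass (krelZ K) a" by (rule ImageI)
qed

lemma kpiK_Sz_cont: "continuous_map (kdisjZ K) (subtopology (kvirt K) (kpiK K ` Sz)) (kpiK K)"
proof -
  have 1: "continuous_map (kdisjZ K) (kvirt K) (kpiK K)"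
    unfolding kdisjZ_def by (rule continuous_map_from_subtopology[OF cont_kpiK])
  have 2: "kpiK K \<in> topspace (kdisjZ K) \<rightarrow> kpiK K ` Sz"
    unfolding top_disjZ by blast
  show ?thesis unfolding continuous_map_in_subtopology using 1 2 by (rule conjI)
qed

lemma claim8: "homeomorphic_map (kquotZ K) (subtopology (kvirt K) (kpiK K ` Sz)) (\<lambda>c. RU `` c)"
proof (rule bijective_open_imp_homeomorphic_map)
  show "continuous_map (kquotZ K) (subtopology (kvirt K) (kpiK K ` Sz)) (\<lambda>c. RU `` c)"
    unfolding kquotZ_def by (rule qtop_univ[OF kpiK_Sz_cont]) (rule hz)
  have img: "(\<lambda>c. RU `` c) ` topspace (kquotZ K) = kpiK K ` Sz"
    unfolding top_quotZ image_image hz ..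
  show "(\<lambda>c. RU `` c) ` topspace (kquotZ K) = topspace (subtopology (kvirt K) (kpiK K ` Sz))"
    unfolding img topspace_subtopology using Sz_top by (simp add: Int_absorb1)
  show "inj_on (\<lambda>c. RU `` c) (topspace (kquotZ K))"
  proof (rule inj_onI)
    fix c1 c2 assume c1: "c1 \<in> topspace (kquotZ K)" and c2: "c2 \<in> topspace (kquotZ K)"
      and eq: "RU `` c1 = RU `` c2"
    obtain I x where a: "c1 = eqclass (krelZ K) (I,x)" "I \<in> kindex K" "x \<in> kzs K I"
      using c1 unfolding top_quotZ by blast
    obtain J y where b: "c2 = eqclass (krelZ K) (J,y)" "J \<in> kindex K" "y \<in> kzs K J"
      using c2 unfolding top_quotZ by blast
    have "kpiK K (I,x) = kpiK K (J,y)" using eq a(1) b(1) hz by simp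
    then have "((I,x),(J,y)) \<in> RU" by (simp add: kpiK_def eqclass_eq_iff)
    then have "zval K (I,x) = zval K (J,y)" by (rule chainU)
    then have pe: "kpsi K I x = kpsi K J y" using a b by (simp add: zval_def)
    define p where "p = kpsi K I x"
    have pI: "p \<in> kF K I" using psi_F[OF a(2,3)] p_def by simp
    have pJ: "p \<in> kF K J" using psi_F[OF b(2,3)] p_def pe by simp
    have ca: "can I p = (I,x)" using psi_inv1[OF a(2,3)] p_def by simp
    have cb: "can J p = (J,y)" using psi_inv1[OF b(2,3)] p_def pe by simp
    have "((I,x),(J,y)) \<in> RZ" using can_conn[OF a(2) b(2) pI pJ] ca cb by simp
    then show "c1 = c2" using a(1) b(1) eqclass_eq by metis
  qed
  show "open_map (kquotZ K) (subtopology (kvirt K) (kpiK K ` Sz)) (\<lambda>c. RU `` c)"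
    unfolding open_map_def
  proof (intro allI impI)
    fix Ou assume Ou: "openin (kquotZ K) Ou"
    define Ou' where "Ou' = {a \<in> Sz. eqclass (krelZ K) a \<in> Ou}"
    have O'o: "openin (kdisjZ K) Ou'"
      using Ou unfolding kquotZ_def openin_qtop top_disjZ Ou'_def by (rule conjunct2)
    have O'sub: "Ou' \<subseteq> Sz" unfolding Ou'_def by blast
    have Osub: "Ou \<subseteq> eqclass (krelZ K) ` Sz" using openin_subset[OF Ou] unfolding top_quotZ .
    have hO: "(\<lambda>c. RU `` c) ` Ou = kpiK K ` Ou'"
    proof (intro set_eqI iffI)
      fix y assume "y \<in> (\<lambda>c. RU `` c) ` Ou"
      then obtain c where c: "c \<in> Ou" "y = RU `` c" by blast
      then obtain a where a: "a \<in> Sz" "c = eqclass (krelZ K) a" using Osub by blast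
      have "a \<in> Ou'" using a c unfolding Ou'_def by simp
      moreover have "y = kpiK K a" using c a hz by simp
      ultimately show "y \<in> kpiK K ` Ou'" by blast
    next
      fix y assume "y \<in> kpiK K ` Ou'"
      then obtain a where a: "a \<in> Ou'" "y = kpiK K a" by blast
      then have "eqclass (krelZ K) a \<in> Ou" "y = RU `` eqclass (krelZ K) a" unfolding Ou'_def using hz by auto
      then show "y \<in> (\<lambda>c. RU `` c) ` Ou" by blast
    qed
    define S where "S I = {x. (I,x) \<in> Ou'}" for I
    define W where "W = (\<Union>I\<in>kindex K. kpsi K I ` S I)"
    have So: "openin (subtopology (kU K I) (kzs K I)) (S I)" if I: "I \<in> kindex K" for I
    proof -
      have j1: "continuous_map (subtopology (kU K I) (kzs K I)) (kdisjU K) (\<lambda>x. (I,x))"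
        unfolding kdisjU_def by (rule continuous_map_from_subtopology[OF continuous_map_component_injection[where X="kU K", OF I]])
      have j2: "(\<lambda>x. (I,x)) \<in> topspace (subtopology (kU K I) (kzs K I)) \<rightarrow> Sz" using I by auto
      have j: "continuous_map (subtopology (kU K I) (kzs K I)) (kdisjZ K) (\<lambda>x. (I,x))"
        unfolding kdisjZ_def continuous_map_in_subtopology using j1 j2 by (rule conjI)
      have "openin (subtopology (kU K I) (kzs K I)) {x \<in> topspace (subtopology (kU K I) (kzs K I)). (I,x) \<in> Ou'}"
        by (rule cm_open[OF j O'o])
      moreover have "{x \<in> topspace (subtopology (kU K I) (kzs K I)). (I,x) \<in> Ou'} = S I"
        using O'sub zs_sub[of K I] unfolding S_def by auto
      ultimately show ?thesis by simp
    qed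
    have Wo: "openin X W"
      unfolding W_def
    proof (rule openin_Union, elim imageE)
      fix T I assume T: "T = kpsi K I ` S I" and I: "I \<in> kindex K"
      have "openin (subtopology X (kF K I)) (kpsi K I ` S I)"
        using homeomorphic_imp_open_map[OF psi_homeo[OF I]] So[OF I] unfolding open_map_def by blast
      then show "openin X T" unfolding T using F_open[OF I] by (rule openin_trans_full)
    qed
    have iW: "kiota K ` W = kpiK K ` Ou'"
    proof (intro set_eqI iffI)
      fix y assume "y \<in> kiota K ` W"
      then obtain I x where I: "I \<in> kindex K" and x: "(I,x) \<in> Ou'" and y: "y = kiota K (kpsi K I x)"
        unfolding W_def S_def by blast
      have xz: "x \<in> kzs K I" using x O'sub by blast
      have "y = kpiK K (I,x)" using y iota_eq[OF I psi_F[OF I xz]] psi_inv1[OF I xz] by simp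
      then show "y \<in> kpiK K ` Ou'" using x by blast
    next
      fix y assume "y \<in> kpiK K ` Ou'"
      then obtain a where a: "a \<in> Ou'" "y = kpiK K a" by blast
      obtain I x where ax: "a = (I,x)" by (cases a)
      have x: "(I,x) \<in> Ou'" and y: "y = kpiK K (I,x)" using a ax by simp_all
      have I: "I \<in> kindex K" and xz: "x \<in> kzs K I" using x O'sub by blast+
      have "y = kiota K (kpsi K I x)" using y iota_eq[OF I psi_F[OF I xz]] psi_inv1[OF I xz] by simp
      moreover have "kpsi K I x \<in> W" unfolding W_def S_def using I x by blast
      ultimately show "y \<in> kiota K ` W" by blast
    qed
    show "openin (subtopology (kvirt K) (kpiK K ` Sz)) ((\<lambda>c. RU `` c) ` Ou)"
      unfolding hO iW[symmetric] by (rule iota_open[OF Wo])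
  qed
qed

end

theorem mainTheorem2:
  fixes X :: "'x topology" and K :: "('x, 'u, 'e) katlas"
  assumes "compact_space X" and "metrizable_space X"
    and "top_kuranishi_atlas X K"
  defines "Z \<equiv> {c \<in> topspace (kvirt K). ksV K c = kzeroV K c}"
  shows
    "(\<forall>p\<in>topspace (kdisjE K). \<forall>q\<in>topspace (kdisjE K).
        (p, q) \<in> (krelE K \<union> converse (krelE K))\<^sup>* \<longrightarrow> kpiK K (kprD K p) = kpiK K (kprD K q))
   \<and> (\<forall>p\<in>topspace (kdisjU K). \<forall>q\<in>topspace (kdisjU K).
        (p, q) \<in> (krelU K \<union> converse (krelU K))\<^sup>* \<longrightarrow>
          kpiE K (kzeroD K p) = kpiE K (kzeroD K q) \<and> kpiE K (ksD K p) = kpiE K (ksD K q))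
   \<and> continuous_map (kvirtE K) (kvirt K) (kprV K)
   \<and> continuous_map (kvirt K) (kvirtE K) (kzeroV K)
   \<and> continuous_map (kvirt K) (kvirtE K) (ksV K)
   \<and> (\<forall>c\<in>topspace (kvirt K). kprV K (ksV K c) = c \<and> kprV K (kzeroV K c) = c)
   \<and> Z = kpiK K ` (SIGMA I:kindex K. kzs K I)
   \<and> homeomorphic_map (kquotZ K) (subtopology (kvirt K) Z) (\<lambda>c. (krelU K \<union> converse (krelU K))\<^sup>* `` c)
   \<and> (\<forall>p\<in>topspace X. \<forall>I\<in>kindex K. \<forall>J\<in>kindex K.
        p \<in> kF K I \<longrightarrow> p \<in> kF K J \<longrightarrow> kiotaI K I p = kiotaI K J p)
   \<and> homeomorphic_map X (subtopology (kvirt K) Z) (kiota K)"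
proof -
  interpret katl X K by unfold_locales (rule assms(3))
  have Zeq: "Z = kpiK K ` (SIGMA I:kindex K. kzs K I)" unfolding Z_def by (rule claim7)
  have c1: "\<forall>p\<in>topspace (kdisjE K). \<forall>q\<in>topspace (kdisjE K).
        (p, q) \<in> (krelE K \<union> converse (krelE K))\<^sup>* \<longrightarrow> kpiK K (kprD K p) = kpiK K (kprD K q)"
    by (intro ballI impI) (rule claim1)
  have c2: "\<forall>p\<in>topspace (kdisjU K). \<forall>q\<in>topspace (kdisjU K).
        (p, q) \<in> (krelU K \<union> converse (krelU K))\<^sup>* \<longrightarrow>
          kpiE K (kzeroD K p) = kpiE K (kzeroD K q) \<and> kpiE K (ksD K p) = kpiE K (ksD K q)"
    by (intro ballI impI) (rule claim2)
  have c6: "\<forall>c\<in>topspace (kvirt K). kprV K (ksV K c) = c \<and> kprV K (kzeroV K c) = c"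
    by (intro ballI) (rule claim6)
  have c9: "\<forall>p\<in>topspace X. \<forall>I\<in>kindex K. \<forall>J\<in>kindex K.
        p \<in> kF K I \<longrightarrow> p \<in> kF K J \<longrightarrow> kiotaI K I p = kiotaI K J p"
  proof (intro ballI impI)
    fix p I J assume "p \<in> topspace X" "I \<in> kindex K" "J \<in> kindex K" "p \<in> kF K I" "p \<in> kF K J"
    then show "kiotaI K I p = kiotaI K J p" using claim9 by blast
  qed
  have c8: "homeomorphic_map (kquotZ K) (subtopology (kvirt K) Z) (\<lambda>c. (krelU K \<union> converse (krelU K))\<^sup>* `` c)"
    unfolding Zeq by (rule claim8)
  have c10: "homeomorphic_map X (subtopology (kvirt K) Z) (kiota K)"
    unfolding Zeq by (rule claim10)
  show ?thesis using c1 c2 claim3 claim4 claim5 c6 Zeq c8 c9 c10 by (intro conjI)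
qed

end
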